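(* Let $a\ge 3$ be an integer and let $\mathcal{E}$ be the equation $x+y=az$. Then there is a constant $C_a$ (depending only on $a$) such that for all positive integers $n$: (i) if $a\in\{3,5\}$, then $M_{\mathcal{E}}(n)\le \dfrac{n^2}{4a^2}+C_a n$; (ii) if $a=4$ or $a\ge 6$, then $M_{\mathcal{E}}(n)\le \dfrac{8(2a-1)n^2}{a^4(4+a)}+C_a n$.
   Context: For a positive integer $n$ write $[n]=\{1,\dots,n\}$. A $k$-coloring of $[n]$ is a map $\chi:[n]\to\{0,\dots,k-1\}$. A solution to a 3-variable equation $\mathcal{E}$ in $[n]$ is an ordered triple $(x,y,z)\in[n]^3$ satisfying $\mathcal{E}$; it is monochromatic under $\chi$ if $\chi(x)=\chi(y)=\chi(z)$. $\mu_\chi(\mathcal{E},n,k)$ is the number of monochromatic solutions under $\chi$, $M_{\mathcal{E}}(n,k)=\min_\chi \mu_\chi(\mathcal{E},n,k)$ over all $k$-colorings $\chi$ of $[n]$, and $M_{\mathcal{E}}(n)=M_{\mathcal{E}}(n,2)$. *)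

theory Defs
  imports "HOL-Library.FuncSet" Complex_Main
begin

(* A 3-variable equation is represented as a predicate on ordered triples of positive integers. *)
type_synonym equation3 = "nat \<Rightarrow> nat \<Rightarrow> nat \<Rightarrow> bool"

definition colorings :: "nat \<Rightarrow> nat \<Rightarrow> (nat \<Rightarrow> nat) set" where
  "colorings n k = ({1..n} \<rightarrow>\<^sub>E {0..<k})"

definition mono_count :: "equation3 \<Rightarrow> nat \<Rightarrow> (nat \<Rightarrow> nat) \<Rightarrow> nat" where
  "mono_count E n \<chi> = card {(x, y, z). x \<in> {1..n} \<and> y \<in> {1..n} \<and> z \<in> {1..n} \<and>
       E x y z \<and> \<chi> x = \<chi> y \<and> \<chi> y = \<chi> z}"

definition M_k :: "equation3 \<Rightarrow> nat \<Rightarrow> nat \<Rightarrow> nat" where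
  "M_k E n k = Min (mono_count E n ` colorings n k)"

definition M :: "equation3 \<Rightarrow> nat \<Rightarrow> nat" where
  "M E n = M_k E n 2"

definition eq_xy_az :: "nat \<Rightarrow> equation3" where
  "eq_xy_az a = (\<lambda>x y z. x + y = a * z)"

end

theory Submission
  imports Defs
begin


lemma slice_card:
  fixes a l u r :: nat
  assumes a: "a > 0" and lu: "l \<le> u + 1"
  shows "real (card {y\<in>{l..u}. a dvd y + r}) \<le> (real u - real l)/real a + 1"
proof (cases "{y\<in>{l..u}. a dvd y + r} = {}")
  case True
  have "real u - real l \<ge> -1" using lu by linarith
  moreover have "real a \<ge> 1" using a by simp
  ultimately have "(real u - real l)/real a \<ge> -1"
    by (simp add: divide_le_eq field_simps)
  moreover have "real (card {y\<in>{l..u}. a dvd y + r}) = 0" by (subst True) simp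
  ultimately show ?thesis by linarith
next
  case False
  define S where "S = {y\<in>{l..u}. a dvd y + r}"
  have fS: "finite S" unfolding S_def by simp
  define y0 where "y0 = Min S"
  have y0S: "y0 \<in> S" unfolding y0_def using False fS S_def Min_in by blast
  have y0le: "\<And>y. y \<in> S \<Longrightarrow> y0 \<le> y" unfolding y0_def using fS by simp
  define d where "d = (u - y0) div a"
  have sub: "S \<subseteq> (\<lambda>j. y0 + a*j) ` {0..d}"
  proof
    fix y assume yS: "y \<in> S"
    have "a dvd (y + r) - (y0 + r)" using dvd_diff_nat[of a "y+r" "y0+r"] yS y0S unfolding S_def by simp
    moreover have "(y + r) - (y0 + r) = y - y0" by simp
    ultimately have dv: "a dvd y - y0" by simp
    have "y = y0 + a * ((y - y0) div a)" using dv y0le[OF yS] by simp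
    moreover have "(y - y0) div a \<le> d" unfolding d_def using yS unfolding S_def
      by (auto intro: div_le_mono)
    ultimately show "y \<in> (\<lambda>j. y0 + a*j) ` {0..d}" by force
  qed
  have "card S \<le> card ((\<lambda>j. y0 + a*j) ` {0..d})" by (rule card_mono) (auto simp: sub)
  also have "\<dots> \<le> card {0..d}" by (rule card_image_le) simp
  finally have c1: "real (card S) \<le> real d + 1" by simp
  have "real d \<le> real (u - y0) / real a" unfolding d_def by (rule of_nat_div_le_of_nat)
  also have "real (u - y0) = real u - real y0" using y0S unfolding S_def by auto
  also have "(real u - real y0) / real a \<le> (real u - real l) / real a"
    using y0S a unfolding S_def by (auto intro: divide_right_mono)
  finally show ?thesis using c1 unfolding S_def by linarith
qed

lemma sum_w: "(\<Sum>w\<in>{0..m::nat}. real w / A + 1) = real m * (real m + 1) / (2*A) + real m + 1"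
  if "A \<noteq> 0" for A :: real
  using that by (induction m) (auto simp: field_simps)

lemma sum_dec: "(\<Sum>x\<in>{1..m::nat}. (C - real x) / A + 1) = (real m * C - real m * (real m + 1) / 2) / A + real m"
  if "A \<noteq> 0" for A C :: real
proof (induction m)
  case 0 then show ?case by simp
next
  case (Suc m)
  have "(\<Sum>x\<in>{1..Suc m}. (C - real x) / A + 1) = (\<Sum>x\<in>{1..m}. (C - real x) / A + 1) + ((C - real (Suc m)) / A + 1)"
    by simp
  also have "\<dots> = (real m * C - real m * (real m + 1) / 2) / A + real m + ((C - real (Suc m)) / A + 1)"
    using Suc by simp
  also have "\<dots> = (real (Suc m) * C - real (Suc m) * (real (Suc m) + 1) / 2) / A + real (Suc m)"
    using that by (simp add: field_simps)
  finally show ?case .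
qed

lemma tri_card:
  fixes a x0 m U :: nat assumes a: "a > 0"
  shows "real (card {(x,y). x0 \<le> x \<and> x \<le> x0 + m \<and> x0 + U \<le> x + y \<and> y \<le> U \<and> a dvd x + y})
     \<le> real m * (real m + 1) / (2 * real a) + real m + 1"
proof -
  have eq: "{(x,y). x0 \<le> x \<and> x \<le> x0 + m \<and> x0 + U \<le> x + y \<and> y \<le> U \<and> a dvd x + y}
     = Sigma {x0..x0+m} (\<lambda>x. {y\<in>{(x0+U) - x..U}. a dvd y + x})"
    by (auto simp: add.commute)
  have "real (card (Sigma {x0..x0+m} (\<lambda>x. {y\<in>{(x0+U) - x..U}. a dvd y + x})))
      = (\<Sum>x\<in>{x0..x0+m}. real (card {y\<in>{(x0+U) - x..U}. a dvd y + x}))"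
    by (subst card_SigmaI) auto
  also have "\<dots> \<le> (\<Sum>x\<in>{x0..x0+m}. real (x - x0) / real a + 1)"
  proof (rule sum_mono)
    fix x assume x: "x \<in> {x0..x0+m}"
    have "real (card {y\<in>{(x0+U) - x..U}. a dvd y + x}) \<le> (real U - real ((x0+U) - x))/real a + 1"
      by (rule slice_card) (use a x in auto)
    also have "real U - real ((x0+U) - x) \<le> real (x - x0)" using x by (cases "x \<le> x0 + U") auto
    then have "(real U - real ((x0+U) - x))/real a \<le> real (x - x0) / real a"
      using a by (auto intro: divide_right_mono)
    finally show "real (card {y\<in>{(x0+U) - x..U}. a dvd y + x}) \<le> real (x - x0) / real a + 1" by simp
  qed
  also have "\<dots> = (\<Sum>w\<in>{0..m}. real w / real a + 1)"
    using sum.shift_bounds_cl_nat_ivl[of "\<lambda>x. real (x - x0) / real a + 1" 0 x0 m]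
    by (simp add: add.commute)
  also have "\<dots> = real m * (real m + 1) / (2 * real a) + real m + 1" using a by (simp add: sum_w)
  finally show ?thesis using eq by simp
qed

lemma dec_card:
  fixes a m V c :: nat assumes a: "a > 0" and Vm: "V + m \<le> c"
  shows "real (card {(x,y). 1 \<le> x \<and> x \<le> m \<and> V \<le> y \<and> x + y \<le> c \<and> a dvd x + y})
     \<le> (real m * (real c - real V) - real m * (real m + 1) / 2) / real a + real m"
proof -
  have eq: "{(x,y). 1 \<le> x \<and> x \<le> m \<and> V \<le> y \<and> x + y \<le> c \<and> a dvd x + y}
     = Sigma {1..m} (\<lambda>x. {y\<in>{V..c - x}. a dvd y + x})"
    using Vm by (auto simp: add.commute)
  have "real (card (Sigma {1..m} (\<lambda>x. {y\<in>{V..c - x}. a dvd y + x})))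
      = (\<Sum>x\<in>{1..m}. real (card {y\<in>{V..c - x}. a dvd y + x}))"
    by (subst card_SigmaI) auto
  also have "\<dots> \<le> (\<Sum>x\<in>{1..m}. ((real c - real V) - real x) / real a + 1)"
  proof (rule sum_mono)
    fix x assume x: "x \<in> {1..m}"
    have "real (card {y\<in>{V..c - x}. a dvd y + x}) \<le> (real (c - x) - real V)/real a + 1"
      by (rule slice_card) (use a x Vm in auto)
    also have "real (c - x) - real V = (real c - real V) - real x" using x Vm by auto
    finally show "real (card {y\<in>{V..c - x}. a dvd y + x}) \<le> ((real c - real V) - real x) / real a + 1" .
  qed
  also have "\<dots> = (real m * (real c - real V) - real m * (real m + 1) / 2) / real a + real m"
    using sum_dec[of "real a" "real c - real V" m] a by simp
  finally show ?thesis using eq by simp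
qed

lemma box_card:
  fixes a m :: nat assumes a: "a > 0"
  shows "real (card {(x,y). 1 \<le> x \<and> x \<le> m \<and> 1 \<le> y \<and> y \<le> m \<and> a dvd x + y})
     \<le> real m * ((real m - 1) / real a + 1)"
proof -
  have eq: "{(x,y). 1 \<le> x \<and> x \<le> m \<and> 1 \<le> y \<and> y \<le> m \<and> a dvd x + y}
     = Sigma {1..m} (\<lambda>x. {y\<in>{1..m}. a dvd y + x})"
    by (auto simp: add.commute)
  have "real (card (Sigma {1..m} (\<lambda>x. {y\<in>{1..m}. a dvd y + x})))
      = (\<Sum>x\<in>{1..m}. real (card {y\<in>{1..m}. a dvd y + x}))"
    by (subst card_SigmaI) auto
  also have "\<dots> \<le> (\<Sum>x\<in>{1..m}. (real m - 1) / real a + 1)"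
  proof (rule sum_mono)
    fix x assume x: "x \<in> {1..m}"
    show "real (card {y\<in>{1..m}. a dvd y + x}) \<le> (real m - 1)/real a + 1"
      using slice_card[of a 1 m x] a by simp
  qed
  also have "\<dots> = real m * ((real m - 1) / real a + 1)" by simp
  finally show ?thesis using eq by simp
qed



lemma fin_col: "finite (colorings n k)"
  unfolding colorings_def by (simp add: finite_PiE)

lemma M_le: assumes "\<chi> \<in> colorings n 2" shows "M E n \<le> mono_count E n \<chi>"
  unfolding M_def M_k_def using assms fin_col by (simp add: Min_le)

lemma restrict_col: assumes "\<And>x. f x < 2" shows "restrict f {1..n} \<in> colorings n 2"
  unfolding colorings_def using assms by auto

lemma mono_restrict:
  "mono_count E n (restrict f {1..n}) = card {(x, y, z). x \<in> {1..n} \<and> y \<in> {1..n} \<and> z \<in> {1..n} \<and>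
       E x y z \<and> f x = f y \<and> f y = f z}"
  unfolding mono_count_def
  by (rule arg_cong[where f=card]) auto

lemma M_mono: assumes "n \<le> n'" shows "M E n \<le> M E n'"
proof -
  have ne: "colorings n' 2 \<noteq> {}"
    using restrict_col[of "\<lambda>_. 0" n'] by auto
  have "M E n' \<in> mono_count E n' ` colorings n' 2"
    unfolding M_def M_k_def using fin_col ne by (intro Min_in) auto
  then obtain \<chi>' where c': "\<chi>' \<in> colorings n' 2" and eq: "M E n' = mono_count E n' \<chi>'" by auto
  define \<chi> where "\<chi> = restrict \<chi>' {1..n}"
  have "\<chi> \<in> colorings n 2" using c' assms unfolding \<chi>_def colorings_def by auto
  then have "M E n \<le> mono_count E n \<chi>" by (rule M_le)
  also have "\<dots> \<le> mono_count E n' \<chi>'"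
    unfolding mono_count_def \<chi>_def
  proof (rule card_mono)
    show "finite {(x, y, z). x \<in> {1..n'} \<and> y \<in> {1..n'} \<and> z \<in> {1..n'} \<and>
       E x y z \<and> \<chi>' x = \<chi>' y \<and> \<chi>' y = \<chi>' z}"
      by (rule finite_subset[of _ "{1..n'} \<times> {1..n'} \<times> {1..n'}"]) auto
  qed (use assms in auto)
  finally show ?thesis using eq by simp
qed

lemma scale:
  fixes E :: equation3 and D :: nat and K L :: real
  assumes D: "D \<ge> 1" and K: "K \<ge> 0" and L: "L \<ge> 0"
    and h: "\<And>k. k \<ge> 1 \<Longrightarrow> real (M E (D*k)) \<le> K * real k ^ 2 + L * real k"
  shows "\<exists>C. \<forall>n::nat. n \<ge> 1 \<longrightarrow> real (M E n) \<le> K / real D ^ 2 * real n ^ 2 + C * real n"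
proof (intro exI allI impI)
  fix n :: nat assume n: "n \<ge> 1"
  define k where "k = n div D + 1"
  have nk: "n \<le> D * k"
  proof -
    have "n mod D < D" using D by simp
    moreover have "D * (n div D) + n mod D = n" by simp
    moreover have "D * k = D * (n div D) + D" unfolding k_def by simp
    ultimately show ?thesis by linarith
  qed
  have k1: "k \<ge> 1" unfolding k_def by simp
  have Dr: "real D \<ge> 1" using D by simp
  have kr: "real k \<le> real n / real D + 1"
    unfolding k_def using of_nat_div_le_of_nat[of n D] by simp
  have k0: "real k \<ge> 0" by simp
  have nD: "real n / real D \<le> real n" using Dr n by (simp add: divide_le_eq)
  have "real (M E n) \<le> real (M E (D*k))" using M_mono[OF nk] by simp
  also have "\<dots> \<le> K * real k ^ 2 + L * real k" using h[OF k1] .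
  also have "K * real k ^ 2 \<le> K * (real n / real D + 1) ^ 2"
    using kr k0 K by (intro mult_left_mono power_mono) auto
  also have "K * (real n / real D + 1) ^ 2 = K / real D ^ 2 * real n ^ 2 + 2 * K * (real n / real D) + K"
    using Dr by (simp add: field_simps power2_eq_square)
  also have "2 * K * (real n / real D) \<le> 2 * K * real n" using nD K by (intro mult_left_mono) auto
  also have "L * real k \<le> L * (real n + 1)" using kr nD L by (intro mult_left_mono) auto
  finally have "real (M E n) \<le> K / real D ^ 2 * real n ^ 2 + 2 * K * real n + K + L * (real n + 1)"
    by simp
  also have "\<dots> \<le> K / real D ^ 2 * real n ^ 2 + (3 * K + 2 * L) * real n"
  proof -
    have "K * 1 \<le> K * real n" using n K by (intro mult_left_mono) auto
    moreover have "L * 1 \<le> L * real n" using n L by (intro mult_left_mono) auto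
    moreover have "(3*K+2*L)*real n = 3*(K*real n) + 2*(L*real n)" by (simp add: algebra_simps)
    moreover have "L * (real n + 1) = L*real n + L" by (simp add: algebra_simps)
    moreover have "2 * K * real n = 2 * (K * real n)" by simp
    ultimately show ?thesis by linarith
  qed
  finally show "real (M E n) \<le> K / real D ^ 2 * real n ^ 2 + (3 * K + 2 * L) * real n" .
qed



definition pcol :: "nat \<Rightarrow> nat \<Rightarrow> nat" where
  "pcol a x = (if a dvd x then (x div a) mod 2 else (x mod a) mod 2)"

lemma pcol_lt: "pcol a x < 2" unfolding pcol_def by auto

lemma odd_key:
  fixes a x y z :: nat
  assumes oa: "odd a" and a3: "a \<ge> 3" and e: "x + y = a * z"
    and c1: "pcol a x = pcol a y" and c2: "pcol a y = pcol a z"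
  shows "a dvd x \<and> a dvd y \<and> z = x div a + y div a \<and> (x div a) mod 2 = (y div a) mod 2
         \<and> pcol a z = (x div a) mod 2"
proof -
  have dxy: "a dvd x + y" using e by simp
  have ax: "a dvd x"
  proof (rule ccontr)
    assume nx: "\<not> a dvd x"
    have ny: "\<not> a dvd y" using nx dxy by (metis dvd_add_right_iff add.commute)
    have r1: "0 < x mod a" "x mod a < a" using nx a3 by (auto simp: mod_eq_0_iff_dvd[symmetric])
    have r2: "0 < y mod a" "y mod a < a" using ny a3 by (auto simp: mod_eq_0_iff_dvd[symmetric])
    have "(x mod a + y mod a) mod a = 0" using dxy by (simp add: mod_add_eq mod_eq_0_iff_dvd)
    then have "a dvd x mod a + y mod a" by (simp add: mod_eq_0_iff_dvd)
    then obtain t where t: "x mod a + y mod a = a * t" by auto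
    have "t = 1"
    proof -
      have "a * t < a * 2" using r1 r2 t by linarith
      then have "t < 2" by simp
      moreover have "t \<noteq> 0"
      proof
        assume "t = 0" then show False using t r1 by simp
      qed
      ultimately show ?thesis by simp
    qed
    then have sum: "x mod a + y mod a = a" using t by simp
    have "odd (x mod a + y mod a)" using sum oa by simp
    then have "(x mod a) mod 2 \<noteq> (y mod a) mod 2"
      by (metis even_add even_iff_mod_2_eq_zero mod2_eq_if)
    then show False using c1 nx ny unfolding pcol_def by simp
  qed
  have ay: "a dvd y" using ax dxy by (simp add: dvd_add_right_iff)
  have a0: "a > 0" using a3 by simp
  have z: "z = x div a + y div a"
  proof -
    have "a * z = a * (x div a) + a * (y div a)" using e ax ay by simp
    then have "a * z = a * (x div a + y div a)" by (simp add: distrib_left)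
    then show ?thesis using a0 by simp
  qed
  show ?thesis using ax ay z c1 c2 unfolding pcol_def by auto
qed



lemma odd_count:
  fixes a k :: nat
  assumes oa: "odd a" and a3: "a \<ge> 3" and k: "k \<ge> 1"
  shows "real (M (eq_xy_az a) (2*a*k)) \<le> 1 * real k ^ 2 + 3 * real k"
proof -
  define n where "n = 2*a*k"
  define S where "S = {(x, y, z). x \<in> {1..n} \<and> y \<in> {1..n} \<and> z \<in> {1..n} \<and>
       eq_xy_az a x y z \<and> pcol a x = pcol a y \<and> pcol a y = pcol a z}"
  have a0: "a > 0" using a3 by simp
  have "M (eq_xy_az a) n \<le> mono_count (eq_xy_az a) n (restrict (pcol a) {1..n})"
    by (rule M_le) (rule restrict_col, rule pcol_lt)
  also have "\<dots> = card S" unfolding S_def by (rule mono_restrict)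
  finally have MS: "M (eq_xy_az a) n \<le> card S" .
  define g where "g = (\<lambda>(x::nat, y::nat, z::nat). if even (x div a) then (x div a, y div a) else (x div a + 1, y div a - 1))"
  define T where "T = ((\<lambda>j. 2*j) ` {0..k}) \<times> ((\<lambda>j. 2*j) ` {0..k})"
  have key: "\<And>x y z. (x,y,z) \<in> S \<Longrightarrow> a dvd x \<and> a dvd y \<and> z = x div a + y div a \<and> (x div a) mod 2 = (y div a) mod 2
         \<and> pcol a z = (x div a) mod 2 \<and> 1 \<le> x div a \<and> 1 \<le> y div a \<and> x div a \<le> 2*k \<and> y div a \<le> 2*k"
  proof -
    fix x y z assume t: "(x,y,z) \<in> S"
    have k1: "a dvd x \<and> a dvd y \<and> z = x div a + y div a \<and> (x div a) mod 2 = (y div a) mod 2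
         \<and> pcol a z = (x div a) mod 2"
      by (rule odd_key[OF oa a3]) (use t in \<open>auto simp: S_def eq_xy_az_def\<close>)
    have b: "1 \<le> x" "x \<le> a*(2*k)" "1 \<le> y" "y \<le> a*(2*k)" using t by (auto simp: S_def n_def mult.assoc mult.left_commute)
    have "x = a * (x div a)" "y = a * (y div a)" using k1 by auto
    then have "1 \<le> x div a \<and> 1 \<le> y div a \<and> x div a \<le> 2*k \<and> y div a \<le> 2*k"
      using b a0 by (metis One_nat_def Suc_leI div_le_mono mult_0_right nonzero_mult_div_cancel_left
          not_less_eq_eq le_zero_eq neq0_conv not_gr0)
    then show "?thesis x y z" using k1 by auto
  qed
  have evT: "\<And>u. even u \<Longrightarrow> u \<le> 2*k \<Longrightarrow> u \<in> (\<lambda>j. 2*j) ` {0..k}"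
  proof -
    fix u :: nat assume "even u" "u \<le> 2*k"
    then show "u \<in> (\<lambda>j. 2*j) ` {0..k}" by (intro image_eqI[of _ _ "u div 2"]) auto
  qed
  have inj: "inj_on g S"
  proof (rule inj_onI)
    fix t1 t2 assume t1: "t1 \<in> S" and t2: "t2 \<in> S" and ge: "g t1 = g t2"
    obtain x1 y1 z1 where e1: "t1 = (x1,y1,z1)" by (cases t1) auto
    obtain x2 y2 z2 where e2: "t2 = (x2,y2,z2)" by (cases t2) auto
    note K1 = key[OF t1[unfolded e1]] and K2 = key[OF t2[unfolded e2]]
    have s1: "fst (g t1) + snd (g t1) = z1" using K1 unfolding e1 g_def by auto
    have s2: "fst (g t2) + snd (g t2) = z2" using K2 unfolding e2 g_def by auto
    have zz: "z1 = z2" using s1 s2 ge by simp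
    have par: "even (x1 div a) = even (x2 div a)" using K1 K2 zz by (metis even_iff_mod_2_eq_zero)
    have "x1 div a = x2 div a \<and> y1 div a = y2 div a"
    proof (cases "even (x1 div a)")
      case True then show ?thesis using ge par unfolding e1 e2 g_def by auto
    next
      case False then show ?thesis using ge par K1 K2 unfolding e1 e2 g_def by auto
    qed
    then show "t1 = t2" using K1 K2 zz unfolding e1 e2 by (metis dvd_mult_div_cancel)
  qed
  have sub: "g ` S \<subseteq> T"
  proof
    fix w assume "w \<in> g ` S"
    then obtain x y z where t: "(x,y,z) \<in> S" and w: "w = g (x,y,z)" by auto
    note K = key[OF t]
    show "w \<in> T"
    proof (cases "even (x div a)")
      case True
      then have "even (y div a)" using K by (metis even_iff_mod_2_eq_zero)
      then have A: "x div a \<in> (\<lambda>j. 2*j) ` {0..k}" and B: "y div a \<in> (\<lambda>j. 2*j) ` {0..k}"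
        using True K by (auto intro!: evT)
      have "w = (x div a, y div a)" using w True unfolding g_def by simp
      then show ?thesis using A B unfolding T_def by simp
    next
      case False
      then have "odd (y div a)" using K by (metis even_iff_mod_2_eq_zero)
      moreover have "x div a + 1 \<le> 2*k"
      proof -
        have h: "x div a \<le> 2*k" using K by simp
        have "x div a \<noteq> 2*k" using False by auto
        then show ?thesis using h by linarith
      qed
      ultimately have A: "x div a + 1 \<in> (\<lambda>j. 2*j) ` {0..k}" and B: "y div a - 1 \<in> (\<lambda>j. 2*j) ` {0..k}"
        using False K by (auto intro!: evT)
      have "w = (x div a + 1, y div a - 1)" using w False unfolding g_def by simp
      then show ?thesis using A B unfolding T_def by simp
    qed
  qed
  have "card S \<le> card T" by (rule card_inj_on_le[OF inj sub]) (simp add: T_def)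
  also have "card T \<le> (k+1) * (k+1)" unfolding T_def card_cartesian_product
    by (intro mult_le_mono card_image_le[THEN le_trans]) auto
  finally have "card S \<le> (k+1)*(k+1)" .
  then have "real (card S) \<le> real ((k+1)*(k+1))" by (simp only: of_nat_le_iff)
  also have "real ((k+1)*(k+1)) = real k ^ 2 + 2 * real k + 1" by (simp add: power2_eq_square algebra_simps)
  also have "\<dots> \<le> 1 * real k ^ 2 + 3 * real k" using k by simp
  finally show ?thesis using MS unfolding n_def by linarith
qed



lemma interval_count:
  fixes a n p q x0 U m :: nat
  assumes a: "a > 0" and hq: "a*p \<le> 2*q"
    and e1: "x0 + U = a*p" and e2: "x0 + m = U" and e3: "U + 1 = q"
  defines "A1 \<equiv> {(x,y). 1 \<le> x \<and> x \<le> p \<and> 1 \<le> y \<and> y \<le> p \<and> a dvd x + y}"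
    and "A2 \<equiv> {(x,y). 1 \<le> x \<and> x \<le> p \<and> q \<le> y \<and> x + y \<le> a*p \<and> a dvd x + y}"
    and "A3 \<equiv> {(x,y). x0 \<le> x \<and> x \<le> x0 + m \<and> x0 + U \<le> x + y \<and> y \<le> U \<and> a dvd x + y}"
    and "AH \<equiv> {(x,y). x \<le> n \<and> y \<le> n \<and> a*q \<le> x + y \<and> a dvd x + y}"
  shows "M (eq_xy_az a) n \<le> card A1 + 2 * card A2 + card A3 + card AH"
proof -
  define f where "f = (\<lambda>x::nat. if p \<le> x \<and> x < q then 1 else (0::nat))"
  define S where "S = {(x, y, z). x \<in> {1..n} \<and> y \<in> {1..n} \<and> z \<in> {1..n} \<and>
       eq_xy_az a x y z \<and> f x = f y \<and> f y = f z}"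
  have "M (eq_xy_az a) n \<le> mono_count (eq_xy_az a) n (restrict f {1..n})"
    by (rule M_le) (rule restrict_col, simp add: f_def)
  also have "\<dots> = card S" unfolding S_def by (rule mono_restrict)
  finally have MS: "M (eq_xy_az a) n \<le> card S" .
  define \<pi> where "\<pi> = (\<lambda>(x::nat, y::nat, z::nat). (x, y))"
  define sw where "sw = (\<lambda>(x::nat, y::nat). (y, x))"
  have inj: "inj_on \<pi> S"
  proof (rule inj_onI)
    fix t1 t2 assume t1: "t1 \<in> S" and t2: "t2 \<in> S" and ge: "\<pi> t1 = \<pi> t2"
    obtain x1 y1 z1 where e1: "t1 = (x1,y1,z1)" by (cases t1) auto
    obtain x2 y2 z2 where e2: "t2 = (x2,y2,z2)" by (cases t2) auto
    have "a * z1 = a * z2" using t1 t2 ge unfolding e1 e2 S_def \<pi>_def eq_xy_az_def by auto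
    then have "z1 = z2" using a by simp
    then show "t1 = t2" using ge unfolding e1 e2 \<pi>_def by simp
  qed
  have sub: "\<pi> ` S \<subseteq> A1 \<union> A2 \<union> sw ` A2 \<union> A3 \<union> AH"
  proof
    fix w assume "w \<in> \<pi> ` S"
    then obtain t0 where t0: "t0 \<in> S" and w0: "w = \<pi> t0" by blast
    obtain x y z where et: "t0 = (x,y,z)" by (cases t0) auto
    have t: "(x,y,z) \<in> S" using t0 et by simp
    have w: "w = (x,y)" using w0 et unfolding \<pi>_def by simp
    have b: "1 \<le> x" "x \<le> n" "1 \<le> y" "y \<le> n" "1 \<le> z" "z \<le> n" and e: "x + y = a * z"
      and c: "f x = f y" "f y = f z"
      using t unfolding S_def eq_xy_az_def by auto
    have dv: "a dvd x + y" using e by simp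
    show "w \<in> A1 \<union> A2 \<union> sw ` A2 \<union> A3 \<union> AH"
    proof (cases "q \<le> z")
      case True
      then have "a * q \<le> a * z" by simp
      then have "a * q \<le> x + y" using e by linarith
      then have "w \<in> AH" using b dv unfolding AH_def w by simp
      then show ?thesis by blast
    next
      case False
      show ?thesis
      proof (cases "p \<le> z")
        case True
        then have "f z = 1" using False unfolding f_def by simp
        then have "f x = 1" "f y = 1" using c by simp_all
        have fx1: "\<And>v. f v = 1 \<Longrightarrow> p \<le> v \<and> v < q"
        proof -
          fix v assume "f v = 1" then show "p \<le> v \<and> v < q" unfolding f_def by (cases "p \<le> v \<and> v < q") auto
        qed
        have xy: "p \<le> x" "x < q" "p \<le> y" "y < q" using fx1[OF \<open>f x = 1\<close>] fx1[OF \<open>f y = 1\<close>] by auto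
        have "a * p \<le> a * z" using True by simp
        then have "x0 \<le> x \<and> x \<le> x0 + m \<and> x0 + U \<le> x + y \<and> y \<le> U"
          using xy e e1 e2 e3 by linarith
        then have "w \<in> A3" using dv unfolding A3_def w by simp
        then show ?thesis by blast
      next
        case zp: False
        then have "f z = 0" unfolding f_def by simp
        then have "f x = 0" "f y = 0" using c by simp_all
        have fx0: "\<And>v. f v = 0 \<Longrightarrow> v < p \<or> q \<le> v"
        proof -
          fix v assume "f v = 0" then show "v < p \<or> q \<le> v" unfolding f_def by (cases "p \<le> v \<and> v < q") auto
        qed
        have xy: "x < p \<or> q \<le> x" "y < p \<or> q \<le> y" using fx0[OF \<open>f x = 0\<close>] fx0[OF \<open>f y = 0\<close>] by auto
        have "a * z < a * p" using zp a by simp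
        then have lt: "x + y < a * p" using e by simp
        consider "x < p" "y < p" | "x < p" "q \<le> y" | "q \<le> x" "y < p" | "q \<le> x" "q \<le> y"
          using xy by auto
        then show ?thesis
        proof cases
          case 1 then have "w \<in> A1" using b dv unfolding A1_def w by simp
          then show ?thesis by blast
        next
          case 2 then have "w \<in> A2" using b dv lt unfolding A2_def w by simp
          then show ?thesis by blast
        next
          case 3
          then have "(y, x) \<in> A2" using b dv lt unfolding A2_def by (simp add: add.commute)
          then have "w \<in> sw ` A2" unfolding w sw_def by (auto intro: image_eqI[of _ _ "(y,x)"])
          then show ?thesis by blast
        next
          case 4 then show ?thesis using lt hq by linarith
        qed
      qed
    qed
  qed
  have f1: "finite A1" unfolding A1_def by (rule finite_subset[of _ "{0..p} \<times> {0..p}"]) auto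
  have f2: "finite A2" unfolding A2_def by (rule finite_subset[of _ "{0..a*p} \<times> {0..a*p}"]) auto
  have f3: "finite A3" unfolding A3_def by (rule finite_subset[of _ "{0..x0+m} \<times> {0..U}"]) auto
  have f4: "finite AH" unfolding AH_def by (rule finite_subset[of _ "{0..n} \<times> {0..n}"]) auto
  have "card S = card (\<pi> ` S)" using inj by (simp add: card_image)
  also have "\<dots> \<le> card (A1 \<union> A2 \<union> sw ` A2 \<union> A3 \<union> AH)"
    by (rule card_mono) (use f1 f2 f3 f4 sub in auto)
  also have "\<dots> \<le> card A1 + card A2 + card (sw ` A2) + card A3 + card AH"
  proof -
    have "card (A1 \<union> A2 \<union> sw ` A2 \<union> A3 \<union> AH) \<le> card (A1 \<union> A2 \<union> sw ` A2 \<union> A3) + card AH" by (rule card_Un_le)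
    moreover have "card (A1 \<union> A2 \<union> sw ` A2 \<union> A3) \<le> card (A1 \<union> A2 \<union> sw ` A2) + card A3" by (rule card_Un_le)
    moreover have "card (A1 \<union> A2 \<union> sw ` A2) \<le> card (A1 \<union> A2) + card (sw ` A2)" by (rule card_Un_le)
    moreover have "card (A1 \<union> A2) \<le> card A1 + card A2" by (rule card_Un_le)
    ultimately show ?thesis by linarith
  qed
  also have "card (sw ` A2) \<le> card A2" using f2 by (rule card_image_le)
  finally show ?thesis using MS by linarith
qed



lemma four_count:
  fixes k :: nat
  assumes k1: "k \<ge> 1"
  shows "real (M (eq_xy_az 4) (32*k)) \<le> 28 * real k^2 + 24 * real k"
proof -
  define a :: nat where "a = 4"
  define n where "n = 32*k"
  define p where "p = 5*k"
  define q where "q = 15*k"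
  define U where "U = 15*k - 1"
  define x0 where "x0 = 5*k + 1"
  define m where "m = 10*k - 2"
  have a0: "a > 0" unfolding a_def by simp
  have hq: "a*p \<le> 2*q" unfolding a_def p_def q_def by simp
  have e1: "x0 + U = a*p" unfolding a_def x0_def U_def p_def using k1 by simp
  have e2: "x0 + m = U" unfolding x0_def U_def m_def using k1 by simp
  have e3: "U + 1 = q" unfolding U_def q_def using k1 by simp
  have hV: "q + p \<le> a*p" unfolding a_def p_def q_def by simp
  have main: "M (eq_xy_az a) n \<le> card {(x,y). 1 \<le> x \<and> x \<le> p \<and> 1 \<le> y \<and> y \<le> p \<and> a dvd x + y}
     + 2 * card {(x,y). 1 \<le> x \<and> x \<le> p \<and> q \<le> y \<and> x + y \<le> a*p \<and> a dvd x + y}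
     + card {(x,y). x0 \<le> x \<and> x \<le> x0 + m \<and> x0 + U \<le> x + y \<and> y \<le> U \<and> a dvd x + y}
     + card {(x,y). x \<le> n \<and> y \<le> n \<and> a*q \<le> x + y \<and> a dvd x + y}"
    by (rule interval_count[OF a0 hq e1 e2 e3])
  have AHsub: "{(x,y). x \<le> n \<and> y \<le> n \<and> a*q \<le> x + y \<and> a dvd x + y}
     \<subseteq> {(x,y). 28*k \<le> x \<and> x \<le> 28*k + 4*k \<and> 28*k + 32*k \<le> x + y \<and> y \<le> 32*k \<and> a dvd x + y}"
    unfolding n_def a_def q_def by auto
  have finT: "finite {(x,y). 28*k \<le> x \<and> x \<le> 28*k + 4*k \<and> 28*k + 32*k \<le> x + y \<and> y \<le> 32*k \<and> a dvd x + y}"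
    by (rule finite_subset[of _ "{0..32*k} \<times> {0..32*k}"]) auto
  have c1: "real (card {(x,y). 1 \<le> x \<and> x \<le> p \<and> 1 \<le> y \<and> y \<le> p \<and> a dvd x + y})
     \<le> real p * ((real p - 1) / real a + 1)" by (rule box_card[OF a0])
  have c2: "real (card {(x,y). 1 \<le> x \<and> x \<le> p \<and> q \<le> y \<and> x + y \<le> a*p \<and> a dvd x + y})
     \<le> (real p * (real (a*p) - real q) - real p * (real p + 1) / 2) / real a + real p"
    by (rule dec_card[OF a0]) (use hV in simp)
  have c3: "real (card {(x,y). x0 \<le> x \<and> x \<le> x0 + m \<and> x0 + U \<le> x + y \<and> y \<le> U \<and> a dvd x + y})
     \<le> real m * (real m + 1) / (2 * real a) + real m + 1" by (rule tri_card[OF a0])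
  have c4: "real (card {(x,y). x \<le> n \<and> y \<le> n \<and> a*q \<le> x + y \<and> a dvd x + y})
     \<le> real (4*k) * (real (4*k) + 1) / (2 * real a) + real (4*k) + 1"
  proof -
    have "card {(x,y). x \<le> n \<and> y \<le> n \<and> a*q \<le> x + y \<and> a dvd x + y}
       \<le> card {(x,y). 28*k \<le> x \<and> x \<le> 28*k + 4*k \<and> 28*k + 32*k \<le> x + y \<and> y \<le> 32*k \<and> a dvd x + y}"
      by (rule card_mono[OF finT AHsub])
    then have "real (card {(x,y). x \<le> n \<and> y \<le> n \<and> a*q \<le> x + y \<and> a dvd x + y})
       \<le> real (card {(x,y). 28*k \<le> x \<and> x \<le> 28*k + 4*k \<and> 28*k + 32*k \<le> x + y \<and> y \<le> 32*k \<and> a dvd x + y})"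
      by (simp only: of_nat_le_iff)
    also have "\<dots> \<le> real (4*k) * (real (4*k) + 1) / (2 * real a) + real (4*k) + 1"
      by (rule tri_card[OF a0])
    finally show ?thesis .
  qed
  define C1 where "C1 = card {(x,y). 1 \<le> x \<and> x \<le> p \<and> 1 \<le> y \<and> y \<le> p \<and> a dvd x + y}"
  define C2 where "C2 = card {(x,y). 1 \<le> x \<and> x \<le> p \<and> q \<le> y \<and> x + y \<le> a*p \<and> a dvd x + y}"
  define C3 where "C3 = card {(x,y). x0 \<le> x \<and> x \<le> x0 + m \<and> x0 + U \<le> x + y \<and> y \<le> U \<and> a dvd x + y}"
  define C4 where "C4 = card {(x,y). x \<le> n \<and> y \<le> n \<and> a*q \<le> x + y \<and> a dvd x + y}"
  have "M (eq_xy_az a) n \<le> C1 + 2 * C2 + C3 + C4"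
    using main unfolding C1_def[symmetric] C2_def[symmetric] C3_def[symmetric] C4_def[symmetric] .
  then have "real (M (eq_xy_az a) n) \<le> real C1 + 2 * real C2 + real C3 + real C4" by simp
  also have "\<dots> \<le> real p * ((real p - 1) / real a + 1)
      + 2 * ((real p * (real (a*p) - real q) - real p * (real p + 1) / 2) / real a + real p)
      + (real m * (real m + 1) / (2 * real a) + real m + 1)
      + (real (4*k) * (real (4*k) + 1) / (2 * real a) + real (4*k) + 1)"
    using c1 c2 c3 c4 unfolding C1_def[symmetric] C2_def[symmetric] C3_def[symmetric] C4_def[symmetric]
    by (intro add_mono mult_left_mono) auto
  also have "\<dots> = 27 * real k ^ 2 + 93 * real k / 4 + 1/4"
  proof -
    have rm: "real m = 10 * real k - 2" unfolding m_def using k1 by simp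
    show ?thesis unfolding rm unfolding a_def p_def q_def
      by (simp add: field_simps power2_eq_square)
  qed
  also have "\<dots> \<le> 28 * real k^2 + 24 * real k"
  proof -
    have "real k * 1 \<le> real k * real k" using k1 by (intro mult_left_mono) auto
    moreover have "real k \<ge> 1" using k1 by simp
    ultimately show ?thesis unfolding power2_eq_square by linarith
  qed
  finally show ?thesis unfolding a_def n_def .
qed



lemma alg6:
  fixes A K :: real
  assumes A: "A \<ge> 6" and K: "K \<ge> 1"
  defines "P \<equiv> 4*(A+1)*K" and "Q \<equiv> 2*A*(A+4)*K + 1" and "Mm \<equiv> 12*A*K"
  shows "P*((P-1)/A+1) + 2*((P*(A*P - Q) - P*(P+1)/2)/A + P) + (Mm*(Mm+1)/(2*A) + Mm + 1)
     \<le> 8*(2*A-1)*(A+4)*K^2 + (24*A+19)*K"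
proof -
  have A0: "A \<noteq> 0" using A by simp
  have eq: "P*((P-1)/A+1) + 2*((P*(A*P - Q) - P*(P+1)/2)/A + P) + (Mm*(Mm+1)/(2*A) + Mm + 1)
     = 8*(2*A-1)*(A+4)*K^2 + (24*A+18)*K + 1 - 16*(A+1)*K/A"
    unfolding P_def Q_def Mm_def using A0 by (simp add: field_simps power2_eq_square)
  have "16*(A+1)*K/A \<ge> 0" using A K by simp
  moreover have "(24*A+19)*K = (24*A+18)*K + K" by (simp add: algebra_simps)
  ultimately show ?thesis unfolding eq using K by linarith
qed

lemma big_count:
  fixes a k :: nat
  assumes a6: "a \<ge> 6" and k1: "k \<ge> 1"
  shows "real (M (eq_xy_az a) (a^2*(a+4)*k)) \<le> 8*(2*real a-1)*(real a+4)*real k^2 + (24*real a+19)*real k"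
proof -
  obtain b where b: "a = b + 6" using a6 by (metis add.commute le_Suc_ex)
  define n where "n = a^2*(a+4)*k"
  define p where "p = 4*(a+1)*k"
  define q where "q = 2*a*(a+4)*k + 1"
  define U where "U = 2*a*(a+4)*k"
  define x0 where "x0 = 2*a*(b+4)*k"
  define m where "m = 12*a*k"
  have a0: "a > 0" using a6 by simp
  have hq: "a*p \<le> 2*q" unfolding p_def q_def b by (simp add: algebra_simps)
  have e1: "x0 + U = a*p" unfolding x0_def U_def p_def b by (simp add: algebra_simps)
  have e2: "x0 + m = U" unfolding x0_def U_def m_def b by (simp add: algebra_simps)
  have e3: "U + 1 = q" unfolding U_def q_def by simp
  have hV: "q + p \<le> a*p"
  proof -
    have "q + p + (2*b*b*k + 16*b*k + 20*k) = a*p + 1" unfolding p_def q_def b by (simp add: algebra_simps)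
    moreover have "20*k \<ge> 1" using k1 by simp
    ultimately show ?thesis by linarith
  qed
  have hH: "2*n < a*q" unfolding n_def q_def b by (simp add: algebra_simps power2_eq_square)
  have AH: "{(x,y). x \<le> n \<and> y \<le> n \<and> a*q \<le> x + y \<and> a dvd x + y} = {}"
    using hH by auto
  have main: "M (eq_xy_az a) n \<le> card {(x,y). 1 \<le> x \<and> x \<le> p \<and> 1 \<le> y \<and> y \<le> p \<and> a dvd x + y}
     + 2 * card {(x,y). 1 \<le> x \<and> x \<le> p \<and> q \<le> y \<and> x + y \<le> a*p \<and> a dvd x + y}
     + card {(x,y). x0 \<le> x \<and> x \<le> x0 + m \<and> x0 + U \<le> x + y \<and> y \<le> U \<and> a dvd x + y}
     + card {(x,y). x \<le> n \<and> y \<le> n \<and> a*q \<le> x + y \<and> a dvd x + y}"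
    by (rule interval_count[OF a0 hq e1 e2 e3])
  have c1: "real (card {(x,y). 1 \<le> x \<and> x \<le> p \<and> 1 \<le> y \<and> y \<le> p \<and> a dvd x + y})
     \<le> real p * ((real p - 1) / real a + 1)" by (rule box_card[OF a0])
  have c2: "real (card {(x,y). 1 \<le> x \<and> x \<le> p \<and> q \<le> y \<and> x + y \<le> a*p \<and> a dvd x + y})
     \<le> (real p * (real (a*p) - real q) - real p * (real p + 1) / 2) / real a + real p"
    by (rule dec_card[OF a0]) (use hV in simp)
  have c3: "real (card {(x,y). x0 \<le> x \<and> x \<le> x0 + m \<and> x0 + U \<le> x + y \<and> y \<le> U \<and> a dvd x + y})
     \<le> real m * (real m + 1) / (2 * real a) + real m + 1" by (rule tri_card[OF a0])
  have rp: "real p = 4*(real a+1)*real k" unfolding p_def by simp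
  have rq: "real q = 2*real a*(real a+4)*real k + 1" unfolding q_def by simp
  have rm: "real m = 12*real a*real k" unfolding m_def by simp
  have rap: "real (a*p) = real a * real p" by simp
  have "real (M (eq_xy_az a) n) \<le> real p * ((real p - 1) / real a + 1)
      + 2 * ((real p * (real a * real p - real q) - real p * (real p + 1) / 2) / real a + real p)
      + (real m * (real m + 1) / (2 * real a) + real m + 1)"
  proof -
    define C1 where "C1 = card {(x,y). 1 \<le> x \<and> x \<le> p \<and> 1 \<le> y \<and> y \<le> p \<and> a dvd x + y}"
    define C2 where "C2 = card {(x,y). 1 \<le> x \<and> x \<le> p \<and> q \<le> y \<and> x + y \<le> a*p \<and> a dvd x + y}"
    define C3 where "C3 = card {(x,y). x0 \<le> x \<and> x \<le> x0 + m \<and> x0 + U \<le> x + y \<and> y \<le> U \<and> a dvd x + y}"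
    have "M (eq_xy_az a) n \<le> C1 + 2 * C2 + C3"
      using main unfolding AH C1_def[symmetric] C2_def[symmetric] C3_def[symmetric] card.empty by simp
    then have "real (M (eq_xy_az a) n) \<le> real C1 + 2 * real C2 + real C3" by simp
    also have "real C1 + 2 * real C2 + real C3 \<le> real p * ((real p - 1) / real a + 1)
      + 2 * ((real p * (real a * real p - real q) - real p * (real p + 1) / 2) / real a + real p)
      + (real m * (real m + 1) / (2 * real a) + real m + 1)"
      using c1 c2 c3 unfolding rap C1_def[symmetric] C2_def[symmetric] C3_def[symmetric]
      by (intro add_mono mult_left_mono) auto
    finally show ?thesis .
  qed
  also have "\<dots> \<le> 8*(2*real a-1)*(real a+4)*real k^2 + (24*real a+19)*real k"
    unfolding rp rq rm by (rule alg6) (use a6 k1 in auto)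
  finally show ?thesis unfolding n_def .
qed



theorem theorem3:
  fixes a :: nat
  assumes "a \<ge> 3"
  shows "\<exists>C::real. \<forall>n::nat. n \<ge> 1 \<longrightarrow>
           ((a = 3 \<or> a = 5) \<longrightarrow>
              real (M (eq_xy_az a) n) \<le> real n ^ 2 / (4 * real a ^ 2) + C * real n) \<and>
           ((a = 4 \<or> a \<ge> 6) \<longrightarrow>
              real (M (eq_xy_az a) n) \<le> 8 * (2 * real a - 1) * real n ^ 2 / (real a ^ 4 * (4 + real a)) + C * real n)"
proof -
  consider (i) "a = 3 \<or> a = 5" | (f) "a = 4" | (b) "a \<ge> 6" using assms by linarith
  then show ?thesis
  proof cases
    case i
    then have oa: "odd a" by auto
    have "\<exists>C. \<forall>n::nat. n \<ge> 1 \<longrightarrow> real (M (eq_xy_az a) n) \<le> 1 / real (2*a) ^ 2 * real n ^ 2 + C * real n"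
    proof (rule scale[where L=3])
      show "real (M (eq_xy_az a) (2*a*k)) \<le> 1 * real k ^ 2 + 3 * real k" if "k \<ge> 1" for k
        using odd_count[OF oa assms that] .
    qed (use assms in auto)
    then obtain C where C: "\<And>n::nat. n \<ge> 1 \<Longrightarrow> real (M (eq_xy_az a) n) \<le> 1 / real (2*a) ^ 2 * real n ^ 2 + C * real n"
      by blast
    have eq: "1 / real (2*a) ^ 2 * real n ^ 2 = real n ^ 2 / (4 * real a ^ 2)" for n :: nat
      by (simp add: field_simps power2_eq_square)
    show ?thesis using C eq i by (intro exI[of _ C]) auto
  next
    case f
    have "\<exists>C. \<forall>n::nat. n \<ge> 1 \<longrightarrow> real (M (eq_xy_az 4) n) \<le> 28 / real (32::nat) ^ 2 * real n ^ 2 + C * real n"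
    proof (rule scale[where L=24])
      show "real (M (eq_xy_az 4) (32*k)) \<le> 28 * real k ^ 2 + 24 * real k" if "k \<ge> 1" for k
        using four_count[OF that] .
    qed auto
    then obtain C where C: "\<And>n::nat. n \<ge> 1 \<Longrightarrow> real (M (eq_xy_az 4) n) \<le> 28 / real (32::nat) ^ 2 * real n ^ 2 + C * real n"
      by blast
    have eq: "28 / real (32::nat) ^ 2 * real n ^ 2 = 8 * (2 * real (4::nat) - 1) * real n ^ 2 / (real (4::nat) ^ 4 * (4 + real (4::nat)))" for n :: nat
      by (simp add: field_simps power2_eq_square)
    show ?thesis using C eq f by (intro exI[of _ C]) auto
  next
    case b
    have "\<exists>C. \<forall>n::nat. n \<ge> 1 \<longrightarrow> real (M (eq_xy_az a) n) \<le> (8*(2*real a-1)*(real a+4)) / real (a^2*(a+4)) ^ 2 * real n ^ 2 + C * real n"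
    proof (rule scale)
      show "1 \<le> a^2*(a+4)" using b by simp
      show "0 \<le> 8*(2*real a-1)*(real a+4)" using b by simp
      show "0 \<le> 24*real a+19" by simp
      show "real (M (eq_xy_az a) (a^2*(a+4)*k)) \<le> 8*(2*real a-1)*(real a+4) * real k ^ 2 + (24*real a+19) * real k"
        if "k \<ge> 1" for k using big_count[OF b that] by simp
    qed
    then obtain C where C: "\<And>n::nat. n \<ge> 1 \<Longrightarrow> real (M (eq_xy_az a) n) \<le> (8*(2*real a-1)*(real a+4)) / real (a^2*(a+4)) ^ 2 * real n ^ 2 + C * real n"
      by blast
    have eq: "(8*(2*real a-1)*(real a+4)) / real (a^2*(a+4)) ^ 2 * real n ^ 2 = 8 * (2 * real a - 1) * real n ^ 2 / (real a ^ 4 * (4 + real a))" for n :: nat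
    proof -
      have h1: "real a \<noteq> 0" "real a + 4 \<noteq> 0" "4 + real a \<noteq> 0" using b by auto
      have h2: "real (a^2*(a+4)) = real a ^ 2 * (real a + 4)" by simp
      have h3: "real a ^ 2 * (real a + 4) \<noteq> 0" "real a ^ 4 * (4 + real a) \<noteq> 0" using h1 by auto
      have "(8*(2*real a-1)*(real a+4)) / (real a ^ 2 * (real a + 4)) ^ 2 * real n ^ 2
          = (8*(2*real a-1)*(real a+4) * real n ^ 2) / (real a ^ 2 * (real a + 4)) ^ 2" by simp
      also have "\<dots> = 8 * (2 * real a - 1) * real n ^ 2 / (real a ^ 4 * (4 + real a))"
      proof -
        have h4: "(real a ^ 2 * (real a + 4)) ^ 2 \<noteq> 0" using h3 by simp
        show ?thesis by (subst frac_eq_eq[OF h4 h3(2)]) (simp add: power2_eq_square power4_eq_xxxx algebra_simps)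
      qed
      finally show ?thesis unfolding h2 .
    qed
    show ?thesis using C eq b by (intro exI[of _ C]) auto
  qed
qed

end
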